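(* Let $P$ be a finite poset and $E$ an equivalence relation on $P$. Then there exist a poset $P'$ on the same ground set, obtained from $P$ by adding order relations (i.e. $x\le_Py\Rightarrow x\le_{P'}y$), and an equivalence relation $E'$ on $P$ whose classes are unions of classes of $E$, such that $E'$ is a chain congruence on $P'$ and $K_{P,E}(\mathbf x)=K_{P',E'}(\mathbf x)$.
   Context: For a finite poset $P$ and equivalence relation $E$ on $P$, $K_{P,E}(\mathbf x)=\sum_f\prod_{x\in P}x_{f(x)}$, summed over all $f:P\to\mathbb Z_{>0}$ such that $x<_Py\Rightarrow f(x)\le f(y)$ and $x\sim_E y\Rightarrow f(x)=f(y)$. An equivalence relation $E$ on $P$ is a chain congruence if (i) every class $[x]_E$ is a chain in $P$, and (ii) whenever $x<_Py$ and $x\not\sim_Ey$, we have $\max[x]_E<_P\min[y]_E$. *)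

theory Defs
  imports "HOL-Library.FuncSet"
begin

definition strict_less :: "'a rel \<Rightarrow> 'a \<Rightarrow> 'a \<Rightarrow> bool" where
  "strict_less r x y \<longleftrightarrow> (x, y) \<in> r \<and> x \<noteq> y"

(* Positive integers are represented by nats \<ge> 1;
   f is extensional (undefined outside P). *)
definition PE_maps :: "'a set \<Rightarrow> 'a rel \<Rightarrow> 'a rel \<Rightarrow> ('a \<Rightarrow> nat) set" where
  "PE_maps P r E = {f. f \<in> P \<rightarrow>\<^sub>E {1..}
      \<and> (\<forall>x\<in>P. \<forall>y\<in>P. strict_less r x y \<longrightarrow> f x \<le> f y)
      \<and> (\<forall>x\<in>P. \<forall>y\<in>P. (x, y) \<in> E \<longrightarrow> f x = f y)}"

(* The formal power series K_{P,E}(x) = \<Sum>_f \<Prod>_{x\<in>P} x_{f(x)} in the variables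
   x_1, x_2, ..., represented by its coefficient function: the coefficient of the
   monomial \<Prod>_i x_i^{\<alpha> i} (exponent vector \<alpha> :: nat \<Rightarrow> nat) is the number of
   (P,E)-partitions f with |f^{-1}(i)| = \<alpha> i for all i. *)
definition K_coeff :: "'a set \<Rightarrow> 'a rel \<Rightarrow> 'a rel \<Rightarrow> (nat \<Rightarrow> nat) \<Rightarrow> nat" where
  "K_coeff P r E \<alpha> = card {f \<in> PE_maps P r E. \<forall>i. card {x \<in> P. f x = i} = \<alpha> i}"

definition chain_congruence :: "'a set \<Rightarrow> 'a rel \<Rightarrow> 'a rel \<Rightarrow> bool" where
  "chain_congruence P r E \<longleftrightarrow>
     (\<forall>x\<in>P. \<forall>u\<in>E `` {x}. \<forall>v\<in>E `` {x}. (u, v) \<in> r \<or> (v, u) \<in> r)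
   \<and> (\<forall>x\<in>P. \<forall>y\<in>P. strict_less r x y \<and> (x, y) \<notin> E \<longrightarrow>
        (\<exists>m\<in>E `` {x}. \<exists>n\<in>E `` {y}.
            (\<forall>u\<in>E `` {x}. (u, m) \<in> r) \<and> (\<forall>v\<in>E `` {y}. (n, v) \<in> r)
          \<and> strict_less r m n))"

end

theory Submission imports Defs begin

lemma linext:
  assumes "finite P" "partial_order_on P r"
  shows "\<exists>k::'a\<Rightarrow>nat. inj_on k P \<and> (\<forall>x\<in>P. \<forall>y\<in>P. (x,y)\<in>r \<longrightarrow> k x \<le> k y)"
proof -
  obtain g where g: "bij_betw g P {0..<card P}" using ex_bij_betw_finite_nat[OF assms(1)] by blast
  have rP: "r \<subseteq> P \<times> P" and tr: "trans r" and an: "antisym r" and rf: "\<forall>x\<in>P. (x,x)\<in>r"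
    using assms(2) unfolding partial_order_on_def preorder_on_def refl_on_def by auto
  define h where "h x = card {y\<in>P. (y,x)\<in>r}" for x
  define M where "M = card P"
  define k where "k x = h x * M + g x" for x
  have gM: "g x < M" if "x \<in> P" for x using g that unfolding M_def bij_betw_def by auto
  have hlt: "h x < h y" if "x\<in>P" "y\<in>P" "(x,y)\<in>r" "x\<noteq>y" for x y
  proof -
    have "{z\<in>P. (z,x)\<in>r} \<subset> {z\<in>P. (z,y)\<in>r}"
    proof
      show "{z\<in>P. (z,x)\<in>r} \<subseteq> {z\<in>P. (z,y)\<in>r}" using tr that by (auto dest: transD)
      have "y \<notin> {z\<in>P. (z,x)\<in>r}" using an that by (auto dest: antisymD)
      moreover have "y \<in> {z\<in>P. (z,y)\<in>r}" using rf that by auto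
      ultimately show "{z\<in>P. (z,x)\<in>r} \<noteq> {z\<in>P. (z,y)\<in>r}" by blast
    qed
    then show ?thesis unfolding h_def using assms(1) by (intro psubset_card_mono) auto
  qed
  have kmono: "k x < k y" if "x\<in>P" "y\<in>P" "h x < h y" for x y
  proof -
    have "k x < h x * M + M" using gM[OF that(1)] unfolding k_def by simp
    also have "\<dots> = (h x + 1) * M" by simp
    also have "\<dots> \<le> h y * M" using that(3) by (intro mult_right_mono) auto
    also have "\<dots> \<le> k y" unfolding k_def by simp
    finally show ?thesis .
  qed
  have "inj_on k P"
  proof (rule inj_onI)
    fix x y assume xy: "x\<in>P" "y\<in>P" "k x = k y"
    have "h x = h y"
    proof (rule ccontr)
      assume "h x \<noteq> h y"
      then have "h x < h y \<or> h y < h x" by auto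
      then show False using kmono xy by fastforce
    qed
    then have "g x = g y" using xy unfolding k_def by simp
    then show "x = y" using g xy unfolding bij_betw_def inj_on_def by blast
  qed
  moreover have "\<forall>x\<in>P. \<forall>y\<in>P. (x,y)\<in>r \<longrightarrow> k x \<le> k y"
    using hlt kmono by (metis less_imp_le order_refl)
  ultimately show ?thesis by blast
qed

lemma R_mono:
  assumes "(x,y) \<in> (r \<union> E)\<^sup>+" and "f \<in> PE_maps P r E" and "r \<union> E \<subseteq> P \<times> P"
  shows "f x \<le> f y"
  using assms(1)
proof (induction rule: trancl_induct)
  case (base y)
  then show ?case using assms(2,3) unfolding PE_maps_def strict_less_def
    by (cases "x = y") auto
next
  case (step y z)
  have "f y \<le> f z" using step(2) assms(2,3) unfolding PE_maps_def strict_less_def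
    by (cases "y = z") auto
  then show ?case using step(3) by simp
qed

theorem lemma6p1:
  fixes P :: "'a set" and r E :: "'a rel"
  assumes "finite P" and "partial_order_on P r" and "equiv P E"
  shows "\<exists>r' E'. partial_order_on P r' \<and> r \<subseteq> r' \<and> equiv P E' \<and> E \<subseteq> E'
           \<and> chain_congruence P r' E' \<and> K_coeff P r E = K_coeff P r' E'"
proof -
  obtain k :: "'a \<Rightarrow> nat" where kinj: "inj_on k P" and kmon: "\<forall>x\<in>P. \<forall>y\<in>P. (x,y)\<in>r \<longrightarrow> k x \<le> k y"
    using linext[OF assms(1,2)] by blast
  have rP: "r \<subseteq> P \<times> P" and rf: "\<forall>x\<in>P. (x,x)\<in>r"
    using assms(2) unfolding partial_order_on_def preorder_on_def refl_on_def by auto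
  have EP: "E \<subseteq> P \<times> P" and Esym: "sym E" using assms(3) unfolding equiv_def by auto
  define R where "R = (r \<union> E)\<^sup>+"
  have RP: "R \<subseteq> P \<times> P" unfolding R_def using rP EP
    by (metis Un_least trancl_subset_Sigma)
  have RP': "x \<in> P \<and> y \<in> P" if "(x,y) \<in> R" for x y using RP that by auto
  have rR: "r \<subseteq> R" and ER: "E \<subseteq> R" unfolding R_def by auto
  have Rrefl: "(x,x) \<in> R" if "x \<in> P" for x using rR rf that by auto
  have Rtr: "(x,z) \<in> R" if "(x,y) \<in> R" "(y,z) \<in> R" for x y z
    using that unfolding R_def by (meson trancl_trans)
  define r' where "r' = {(x,y). (x,y)\<in>R \<and> ((y,x)\<notin>R \<or> k x \<le> k y)}"
  define E' where "E' = {(x,y). (x,y)\<in>R \<and> (y,x)\<in>R}"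
  have po: "partial_order_on P r'"
    unfolding partial_order_on_def preorder_on_def refl_on_def
  proof (intro conjI)
    show "r' \<subseteq> P \<times> P" using RP unfolding r'_def by auto
    show "\<forall>x\<in>P. (x, x) \<in> r'" using Rrefl unfolding r'_def by auto
    show "trans r'"
    proof (rule transI)
      fix x y z assume a: "(x,y) \<in> r'" "(y,z) \<in> r'"
      then have xy: "(x,y)\<in>R" and yz: "(y,z)\<in>R" unfolding r'_def by auto
      have xz: "(x,z) \<in> R" using Rtr xy yz by blast
      show "(x,z) \<in> r'"
      proof (cases "(z,x) \<in> R")
        case True
        then have "(y,x)\<in>R" "(z,y)\<in>R" using Rtr xy yz by blast+
        then show ?thesis using a xz unfolding r'_def by auto
      next
        case False then show ?thesis using xz unfolding r'_def by auto
      qed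
    qed
    show "antisym r'"
    proof (rule antisymI)
      fix x y assume "(x,y) \<in> r'" "(y,x) \<in> r'"
      then have "k x = k y" "x \<in> P" "y \<in> P" unfolding r'_def using RP' by auto
      then show "x = y" using kinj unfolding inj_on_def by blast
    qed
  qed
  have rr': "r \<subseteq> r'"
  proof
    fix p assume p: "p \<in> r"
    obtain x y where [simp]: "p = (x,y)" by (cases p)
    have "(x,y) \<in> R" using p rR by auto
    moreover have "k x \<le> k y" using p kmon rP by auto
    ultimately show "p \<in> r'" unfolding r'_def by auto
  qed
  have eq: "equiv P E'"
  proof (rule equivI)
    show "E' \<subseteq> P \<times> P" using RP unfolding E'_def by auto
    show "refl_on P E'" unfolding refl_on_def E'_def using Rrefl by auto
    show "sym E'" unfolding E'_def by (auto intro: symI)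
    show "trans E'" unfolding E'_def using Rtr by (auto intro!: transI)
  qed
  have EE': "E \<subseteq> E'"
  proof
    fix p assume p: "p \<in> E"
    obtain x y where [simp]: "p = (x,y)" by (cases p)
    have "(y,x) \<in> E" using p Esym by (auto dest: symD)
    then show "p \<in> E'" using p ER unfolding E'_def by auto
  qed
  have cls: "E' `` {x} = {y. (x,y) \<in> R \<and> (y,x) \<in> R}" for x unfolding E'_def by auto
  have cc: "chain_congruence P r' E'"
    unfolding chain_congruence_def
  proof (intro conjI ballI allI impI)
    fix x u v assume "x \<in> P" "u \<in> E' `` {x}" "v \<in> E' `` {x}"
    then have "(u,v) \<in> R" "(v,u) \<in> R" unfolding cls using Rtr by blast+
    then show "(u, v) \<in> r' \<or> (v, u) \<in> r'" unfolding r'_def by auto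
  next
    fix x y assume xP: "x \<in> P" and yP: "y \<in> P" and h: "strict_less r' x y \<and> (x, y) \<notin> E'"
    have xyR: "(x,y) \<in> R" using h unfolding strict_less_def r'_def by auto
    have yxR: "(y,x) \<notin> R" using h xyR unfolding E'_def by auto
    have finC: "finite (E' `` {z})" if "z \<in> P" for z
      using RP assms(1) unfolding cls by (rule_tac finite_subset[of _ P]) auto
    have neC: "z \<in> E' `` {z}" if "z \<in> P" for z using Rrefl that unfolding cls by auto
    define Cx where "Cx = E' `` {x}"
    define Cy where "Cy = E' `` {y}"
    obtain m where m: "m \<in> Cx" "k m = Max (k ` Cx)"
      using finC[OF xP] neC[OF xP] unfolding Cx_def
      by (metis (mono_tags, lifting) Max_in empty_iff finite_imageI image_iff image_is_empty)
    obtain n where n: "n \<in> Cy" "k n = Min (k ` Cy)"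
      using finC[OF yP] neC[OF yP] unfolding Cy_def
      by (metis (mono_tags, lifting) Min_in empty_iff finite_imageI image_iff image_is_empty)
    have mx: "(m,x) \<in> R" "(x,m) \<in> R" using m(1) unfolding Cx_def cls by auto
    have ny: "(n,y) \<in> R" "(y,n) \<in> R" using n(1) unfolding Cy_def cls by auto
    show "\<exists>m\<in>E' `` {x}. \<exists>n\<in>E' `` {y}. (\<forall>u\<in>E' `` {x}. (u, m) \<in> r') \<and>
            (\<forall>v\<in>E' `` {y}. (n, v) \<in> r') \<and> strict_less r' m n"
    proof (intro bexI conjI ballI)
      show "m \<in> E' `` {x}" using m Cx_def by simp
      show "n \<in> E' `` {y}" using n Cy_def by simp
      fix u assume u: "u \<in> E' `` {x}"
      then have "(u,m) \<in> R" "(m,u) \<in> R" using mx Rtr unfolding cls by blast+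
      moreover have "k u \<le> k m" using m u finC[OF xP] unfolding Cx_def by simp
      ultimately show "(u, m) \<in> r'" unfolding r'_def by auto
    next
      fix v assume v: "v \<in> E' `` {y}"
      then have "(n,v) \<in> R" "(v,n) \<in> R" using ny Rtr unfolding cls by blast+
      moreover have "k n \<le> k v" using n v finC[OF yP] unfolding Cy_def by simp
      ultimately show "(n, v) \<in> r'" unfolding r'_def by auto
    next
      have mn: "(m,n) \<in> R" using mx ny xyR Rtr by blast
      have nm: "(n,m) \<notin> R" using mx ny yxR Rtr by blast
      have "m \<noteq> n" using mn nm by auto
      then show "strict_less r' m n" using mn nm unfolding strict_less_def r'_def by auto
    qed
  qed
  have rEP: "r \<union> E \<subseteq> P \<times> P" using rP EP by auto
  have PE: "PE_maps P r E = PE_maps P r' E'"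
  proof
    show "PE_maps P r E \<subseteq> PE_maps P r' E'"
    proof
      fix f assume f: "f \<in> PE_maps P r E"
      have "f x \<le> f y" if "(x,y) \<in> R" for x y using R_mono[OF _ f rEP] that unfolding R_def by blast
      then show "f \<in> PE_maps P r' E'" using f unfolding PE_maps_def strict_less_def r'_def E'_def
        by (auto intro: antisym)
    qed
    show "PE_maps P r' E' \<subseteq> PE_maps P r E"
      using rr' EE' unfolding PE_maps_def strict_less_def by blast
  qed
  have "K_coeff P r E = K_coeff P r' E'" unfolding K_coeff_def PE by simp
  then show ?thesis using po rr' eq EE' cc by blast
qed

end
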